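(* Let $E$ be a closed subset of $\mathbb{R}^n$ and let $k \ge 1$ be such that every two points $x, y \in E$ can be connected by a rectifiable path contained in $E$ whose length is at most $k\,|x-y|$. Let $A$ be a continuous function on $E$ whose values $A(x)$ are linear mappings from $\mathbb{R}^n$ to $\mathbb{R}$, and let $f : E \to \mathbb{R}$ be locally Lipschitz. Suppose that for every interval $I \subseteq \mathbb{R}$ and every locally Lipschitz map $p : I \to E$, the derivative of $t \mapsto f(p(t))$ equals $A(p(t))(p'(t))$ for almost every $t \in I$. Then for every $x, y \in E$, $$|f(y) - f(x) - A(x)(y-x)| \le k\,|x-y|\,\sup\{\,|A(w) - A(x)| : w \in E,\ |x-w| \le k\,|x-y|\,\}.$$
   Context: $|\cdot|$ denotes the Euclidean norm on $\mathbb{R}^n$; for linear maps $B : \mathbb{R}^n \to \mathbb{R}$, $|B|$ denotes the operator norm (equivalently, the Euclidean norm of the vector representing $B$ via the standard inner product). *)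

theory Defs
  imports "HOL-Analysis.Analysis"
begin

definition loc_lipschitz_on :: "'a::metric_space set \<Rightarrow> ('a \<Rightarrow> 'b::metric_space) \<Rightarrow> bool" where
  "loc_lipschitz_on S f \<longleftrightarrow> (\<forall>x\<in>S. \<exists>r>0. \<exists>L. L-lipschitz_on (ball x r \<inter> S) f)"

definition path_variation :: "(real \<Rightarrow> 'a::real_normed_vector) \<Rightarrow> ereal" where
  "path_variation g = (SUP tm \<in> {(t, m). t (0::nat) = (0::real) \<and> t m = 1 \<and> (\<forall>i<m. t i \<le> t (Suc i))}.
      ereal (\<Sum>i<snd tm. norm (g (fst tm (Suc i)) - g (fst tm i))))"

definition rectifiable_path :: "(real \<Rightarrow> 'a::real_normed_vector) \<Rightarrow> bool" where
  "rectifiable_path g \<longleftrightarrow> path g \<and> path_variation g < \<infinity>"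

definition path_length :: "(real \<Rightarrow> 'a::real_normed_vector) \<Rightarrow> real" where
  "path_length g = real_of_ereal (path_variation g)"

end

theory Submission
  imports Defs
begin



lemma vec1_lmeasurable_iff:
  fixes T :: "(real^1) set"
  shows "T \<in> lmeasurable \<longleftrightarrow> (\<lambda>x. x $ 1) ` T \<in> lmeasurable"
proof -
  have "(\<lambda>x::real^1. 1::real) integrable_on T \<longleftrightarrow> (\<lambda>x::real. 1::real) integrable_on (\<lambda>x. x $ 1) ` T"
    using has_integral_vec1_I [of "\<lambda>x::real^1. 1::real"] has_integral_vec1_D [of "\<lambda>x::real^1. 1::real"]
    unfolding integrable_on_def o_def by metis
  then show ?thesis by (simp add: lmeasurable_iff_integrable_on)
qed

lemma vec1_measure:
  fixes T :: "(real^1) set"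
  assumes "T \<in> lmeasurable"
  shows "measure lebesgue T = measure lebesgue ((\<lambda>x. x $ 1) ` T)"
  using assms vec1_lmeasurable_iff[of T]
  by (simp add: lmeasure_integral integral_vec1_eq [of T "\<lambda>x. 1::real"] o_def)

lemma image_meas_bound:
  fixes \<phi> :: "real \<Rightarrow> real"
  assumes G: "G \<in> lmeasurable"
    and d: "\<And>t. t \<in> G \<Longrightarrow> (\<phi> has_real_derivative d t) (at t within G)"
    and bd: "\<And>t. t \<in> G \<Longrightarrow> \<bar>d t\<bar> \<le> M"
  shows "\<phi> ` G \<in> lmeasurable \<and> measure lebesgue (\<phi> ` G) \<le> M * measure lebesgue G"
proof -
  let ?G = "vec ` G :: (real^1) set"
  let ?F = "\<lambda>v::real^1. vec (\<phi> (v $ 1)) :: real^1"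
  have dropG: "(\<lambda>x::real^1. x $ 1) ` ?G = G" by (force simp: image_comp o_def)
  have G': "?G \<in> lmeasurable" using G vec1_lmeasurable_iff dropG by metis
  have FG: "?F ` ?G = vec ` (\<phi> ` G)" by (force simp: image_comp o_def)
  have dropFG: "(\<lambda>x::real^1. x $ 1) ` (?F ` ?G) = \<phi> ` G" unfolding FG by (force simp: image_comp o_def)
  have der: "(?F has_derivative (*\<^sub>R) (d (x $ 1))) (at x within ?G)" if xG: "x \<in> ?G" for x
  proof -
    obtain z where z: "z \<in> G" "x = vec z" using xG by blast
    have "(\<phi> has_derivative (\<lambda>h. h * d z)) (at z within G)"
      using d[OF z(1)] unfolding has_field_derivative_def by (simp add: mult.commute[of _ "d z"])
    from has_derivative_vector_1[where g'=d, OF this] show ?thesis using z by simp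
  qed
  have meas: "(\<lambda>x. matrix ((*\<^sub>R) (d (x $ 1)) :: real^1 \<Rightarrow> real^1) $ 1 $ 1) \<in> borel_measurable (lebesgue_on ?G)"
    by (rule borel_measurable_partial_derivatives[OF _ der]) (use G' in auto)
  have det: "det (matrix ((*\<^sub>R) c) :: real^1^1) = c" for c by simp
  have m11: "matrix ((*\<^sub>R) c :: real^1 \<Rightarrow> real^1) $ 1 $ 1 = c" for c
    using det[of c] by (simp add: det_1)
  have meas': "(\<lambda>x::real^1. d (x $ 1)) \<in> borel_measurable (lebesgue_on ?G)"
    using meas by (simp add: m11)
  have int: "(\<lambda>x. \<bar>det (matrix ((*\<^sub>R) (d (x $ 1)) :: real^1 \<Rightarrow> real^1))\<bar>) integrable_on ?G"
  proof -
    have "(\<lambda>x::real^1. d (x $ 1)) absolutely_integrable_on ?G"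
      by (rule measurable_bounded_by_integrable_imp_absolutely_integrable[OF meas', where g="\<lambda>_. M"])
         (use G' bd in \<open>auto intro: integrable_on_const\<close>)
    then show ?thesis using absolutely_integrable_abs_iff set_lebesgue_integral_eq_integral(1)
      by (simp add: absolutely_integrable_on_def)
  qed
  have bnd: "\<bar>det (matrix ((*\<^sub>R) (d (x $ 1)) :: real^1 \<Rightarrow> real^1))\<bar> \<le> M" if "x \<in> ?G" for x
    using that bd by auto
  have 1: "?F ` ?G \<in> lmeasurable"
    by (rule measurable_bounded_differentiable_image[OF G' der int bnd])
  have 2: "measure lebesgue (?F ` ?G) \<le> M * measure lebesgue ?G"
    by (rule measure_bounded_differentiable_image[OF G' der int bnd])
  show ?thesis
    using 1 2 vec1_lmeasurable_iff[of "?F ` ?G"] vec1_measure[OF 1] vec1_measure[OF G'] dropFG dropG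
    by simp
qed




lemma lip_cont:
  fixes \<phi> :: "'a::metric_space \<Rightarrow> 'b::metric_space"
  assumes "\<And>t. t\<in>S \<Longrightarrow> \<exists>T B. open T \<and> t\<in>T \<and> (\<forall>y\<in>S\<inter>T. dist (\<phi> y) (\<phi> t) \<le> B * dist y t)"
  shows "continuous_on S \<phi>"
  unfolding continuous_on_iff
proof (intro ballI allI impI)
  fix t e assume t: "t \<in> S" and e: "(0::real) < e"
  obtain T B where T: "open T" "t \<in> T" and B: "\<forall>y\<in>S\<inter>T. dist (\<phi> y) (\<phi> t) \<le> B * dist y t"
    using assms[OF t] by blast
  obtain r where r: "r > 0" "ball t r \<subseteq> T" using T open_contains_ball by blast
  define d where "d = min r (e / (\<bar>B\<bar> + 1))"
  have d: "d > 0" using r e by (simp add: d_def)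
  show "\<exists>d>0. \<forall>x'\<in>S. dist x' t < d \<longrightarrow> dist (\<phi> x') (\<phi> t) < e"
  proof (intro exI[of _ d] conjI ballI impI d)
    fix y assume y: "y \<in> S" "dist y t < d"
    then have "y \<in> T" using r by (auto simp: d_def dist_commute)
    then have "dist (\<phi> y) (\<phi> t) \<le> B * dist y t" using B y by blast
    also have "\<dots> \<le> \<bar>B\<bar> * dist y t" by (simp add: mult_right_mono)
    also have "\<dots> \<le> \<bar>B\<bar> * d" using y by (simp add: mult_left_mono)
    also have "\<dots> < e"
    proof -
      have "d \<le> e / (\<bar>B\<bar> + 1)" by (simp add: d_def)
      then have "\<bar>B\<bar> * d \<le> \<bar>B\<bar> * (e / (\<bar>B\<bar> + 1))" by (rule mult_left_mono) simp
      also have "\<dots> < e" using e by (simp add: field_simps)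
      finally show ?thesis .
    qed
    finally show "dist (\<phi> y) (\<phi> t) < e" .
  qed
qed

lemma ae_deriv_bound:
  fixes \<phi> :: "real \<Rightarrow> real"
  assumes ab: "a \<le> b" and M: "0 \<le> M" and N: "negligible N"
    and d0: "\<And>t. t \<in> {a..b} - N \<Longrightarrow> \<exists>D. (\<phi> has_real_derivative D) (at t within {a..b}) \<and> \<bar>D\<bar> \<le> M"
    and lip: "\<And>t. t \<in> {a..b} \<Longrightarrow> \<exists>T B. open T \<and> t \<in> T \<and> (\<forall>y\<in>{a..b} \<inter> T. \<bar>\<phi> y - \<phi> t\<bar> \<le> B * \<bar>y - t\<bar>)"
  shows "\<bar>\<phi> b - \<phi> a\<bar> \<le> M * (b - a)"
proof -
  define d where "d t = (SOME D. (\<phi> has_real_derivative D) (at t within {a..b}) \<and> \<bar>D\<bar> \<le> M)" for t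
  have d: "(\<phi> has_real_derivative d t) (at t within {a..b}) \<and> \<bar>d t\<bar> \<le> M" if "t \<in> {a..b} - N" for t
    unfolding d_def using someI_ex[OF d0[OF that]] .
  define S where "S = {a..b}"
  define G where "G = S - N"
  have Sm: "S \<in> lmeasurable" by (simp add: S_def)
  have Nm: "N \<in> sets lebesgue" using N negligible_imp_sets by blast
  have Gm: "G \<in> lmeasurable" unfolding G_def using Sm Nm by (rule fmeasurable_Diff)
  have dG: "(\<phi> has_real_derivative d t) (at t within G)" if "t \<in> G" for t
    using d[of t] that by (auto simp: G_def S_def intro: DERIV_subset)
  have bG: "\<bar>d t\<bar> \<le> M" if "t \<in> G" for t
    using d[of t] that by (auto simp: G_def S_def)
  from image_meas_bound[OF Gm dG bG]
  have imG: "\<phi> ` G \<in> lmeasurable" "measure lebesgue (\<phi> ` G) \<le> M * measure lebesgue G" by auto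
  have "measure lebesgue G \<le> measure lebesgue S"
    using Gm Sm by (intro measure_mono_fmeasurable) (auto simp: G_def)
  also have "measure lebesgue S = b - a" using ab by (simp add: S_def)
  finally have "M * measure lebesgue G \<le> M * (b - a)" using M by (simp add: mult_left_mono)
  with imG have mG: "measure lebesgue (\<phi> ` G) \<le> M * (b - a)" by linarith
  have negN: "negligible (\<phi> ` (S \<inter> N))"
  proof (rule negligible_locally_Lipschitz_image)
    show "DIM(real) \<le> DIM(real)" by simp
    show "negligible (S \<inter> N)" using N negligible_subset by blast
    fix x assume "x \<in> S \<inter> N"
    then obtain T B where "open T" "x \<in> T" "\<forall>y\<in>S \<inter> T. \<bar>\<phi> y - \<phi> x\<bar> \<le> B * \<bar>y - x\<bar>"
      using lip[of x] by (auto simp: S_def)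
    then show "\<exists>T B. open T \<and> x \<in> T \<and> (\<forall>y\<in>S \<inter> N \<inter> T. norm (\<phi> y - \<phi> x) \<le> B * norm (y - x))"
      by (intro exI[of _ T] exI[of _ B]) auto
  qed
  have cont: "continuous_on S \<phi>"
    by (rule lip_cont) (use lip in \<open>auto simp: S_def dist_real_def\<close>)
  have comp: "compact (\<phi> ` S)" using cont by (simp add: S_def compact_continuous_image)
  have seg: "closed_segment (\<phi> a) (\<phi> b) \<subseteq> \<phi> ` S"
  proof -
    have "connected (\<phi> ` S)" by (rule connected_continuous_image[OF cont]) (simp add: S_def)
    then have cv: "convex (\<phi> ` S)" by (metis is_interval_connected_1 is_interval_convex_1)
    have "\<phi> a \<in> \<phi> ` S" "\<phi> b \<in> \<phi> ` S" using ab by (auto simp: S_def)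
    then show ?thesis using cv by (simp add: closed_segment_subset)
  qed
  have Nm2: "\<phi> ` (S \<inter> N) \<in> lmeasurable" using negN by (simp add: negligible_imp_measurable)
  have Um: "\<phi> ` G \<union> \<phi> ` (S \<inter> N) \<in> lmeasurable" using imG(1) Nm2 by (rule fmeasurable.Un)
  have Sm2: "\<phi> ` S \<in> lmeasurable" using comp by (rule lmeasurable_compact)
  have sub: "\<phi> ` S \<subseteq> \<phi> ` G \<union> \<phi> ` (S \<inter> N)" by (auto simp: G_def)
  have "\<bar>\<phi> b - \<phi> a\<bar> = measure lebesgue (closed_segment (\<phi> a) (\<phi> b))"
    by (auto simp: closed_segment_eq_real_ivl)
  also have "\<dots> \<le> measure lebesgue (\<phi> ` S)"
    by (rule measure_mono_fmeasurable[OF seg _ Sm2]) (simp add: closed_segment_eq_real_ivl)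
  also have "\<dots> \<le> measure lebesgue (\<phi> ` G \<union> \<phi> ` (S \<inter> N))"
    using sub Um by (rule measure_mono_fmeasurable[OF _ fmeasurableD[OF Sm2]])
  also have "\<dots> \<le> measure lebesgue (\<phi> ` G) + measure lebesgue (\<phi> ` (S \<inter> N))"
    using imG(1) Nm2 by (intro measure_Un_le fmeasurableD)
  also have "measure lebesgue (\<phi> ` (S \<inter> N)) = 0" using negN by (simp add: negligible_imp_measure0)
  finally show ?thesis using mG by linarith
qed




definition PS :: "real \<Rightarrow> ((nat \<Rightarrow> real) \<times> nat) set" where
  "PS t = {(\<tau>, m). \<tau> (0::nat) = (0::real) \<and> \<tau> m = t \<and> (\<forall>i<m. \<tau> i \<le> \<tau> (Suc i))}"

definition psum :: "(real \<Rightarrow> 'a::real_normed_vector) \<Rightarrow> (nat \<Rightarrow> real) \<times> nat \<Rightarrow> real" where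
  "psum g P = (\<Sum>i<snd P. norm (g (fst P (Suc i)) - g (fst P i)))"

lemma PS_ext:
  assumes "(\<tau>, m) \<in> PS t" "t \<le> t'"
  shows "(\<tau>(Suc m := t'), Suc m) \<in> PS t'"
    and "psum g (\<tau>(Suc m := t'), Suc m) = psum g (\<tau>, m) + norm (g t' - g t)"
proof -
  show "(\<tau>(Suc m := t'), Suc m) \<in> PS t'"
    using assms by (auto simp: PS_def less_Suc_eq)
  have "(\<Sum>i<m. norm ((g ((\<tau>(Suc m := t')) (Suc i)) - g ((\<tau>(Suc m := t')) i))))
      = (\<Sum>i<m. norm (g (\<tau> (Suc i)) - g (\<tau> i)))"
    by (intro sum.cong) auto
  then show "psum g (\<tau>(Suc m := t'), Suc m) = psum g (\<tau>, m) + norm (g t' - g t)"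
    using assms by (simp add: psum_def PS_def)
qed

lemma psum_nonneg: "0 \<le> psum g P"
  by (simp add: psum_def sum_nonneg)

lemma PS_nonempty: "(\<lambda>i. if i = 0 then 0 else t, 1) \<in> PS t" if "0 \<le> t" for t :: real
  using that by (auto simp: PS_def)

context
  fixes g :: "real \<Rightarrow> 'a::real_normed_vector"
  assumes rp: "rectifiable_path g"
begin

lemma psum_le_length:
  assumes P: "P \<in> PS t" and t: "t \<le> 1"
  shows "psum g P \<le> path_length g"
proof -
  obtain \<tau> m where Pe: "P = (\<tau>, m)" by (cases P)
  let ?Q = "(\<tau>(Suc m := 1), Suc m)"
  have Q: "?Q \<in> PS 1" "psum g ?Q = psum g P + norm (g 1 - g t)"
    using PS_ext(1)[of \<tau> m t 1] PS_ext(2)[of \<tau> m t 1 g] P t Pe by auto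
  have "ereal (psum g ?Q) \<le> path_variation g"
    unfolding path_variation_def
    by (rule SUP_upper2[OF Q(1)[unfolded PS_def]]) (simp add: psum_def)
  moreover have "path_variation g < \<infinity>" using rp by (simp add: rectifiable_path_def)
  ultimately have "psum g ?Q \<le> path_length g"
    unfolding path_length_def by (cases "path_variation g") auto
  moreover have "0 \<le> norm (g 1 - g t)" by simp
  ultimately show ?thesis using Q(2) by linarith
qed

definition sv :: "real \<Rightarrow> real" where "sv t = Sup (psum g ` PS t)"

lemma sv_bdd: "t \<le> 1 \<Longrightarrow> bdd_above (psum g ` PS t)"
  using psum_le_length by (auto intro!: bdd_aboveI)

lemma sv_ne: "0 \<le> t \<Longrightarrow> psum g ` PS t \<noteq> {}"
  using PS_nonempty by blast

lemma sv_nonneg: "0 \<le> t \<Longrightarrow> t \<le> 1 \<Longrightarrow> 0 \<le> sv t"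
  unfolding sv_def
  by (rule order.trans[OF psum_nonneg cSup_upper[OF imageI[OF PS_nonempty] sv_bdd]])

lemma sv_le_length: "0 \<le> t \<Longrightarrow> t \<le> 1 \<Longrightarrow> sv t \<le> path_length g"
  unfolding sv_def using sv_ne psum_le_length by (auto intro!: cSup_least)

lemma sv_key:
  assumes "0 \<le> t" "t \<le> t'" "t' \<le> 1"
  shows "sv t + norm (g t' - g t) \<le> sv t'"
proof -
  have "sv t \<le> sv t' - norm (g t' - g t)"
    unfolding sv_def[of t]
  proof (rule cSup_least)
    show "psum g ` PS t \<noteq> {}" using assms sv_ne by simp
    fix z assume "z \<in> psum g ` PS t"
    then obtain \<tau> m where P: "(\<tau>, m) \<in> PS t" "z = psum g (\<tau>, m)" by auto
    have "psum g (\<tau>(Suc m := t'), Suc m) \<le> sv t'"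
      unfolding sv_def using PS_ext(1)[OF P(1) assms(2)] sv_bdd[OF assms(3)] by (auto intro: cSup_upper)
    then show "z \<le> sv t' - norm (g t' - g t)"
      using PS_ext(2)[OF P(1) assms(2), of g] P(2) by simp
  qed
  then show ?thesis by simp
qed


lemma sv_mono: "0 \<le> t \<Longrightarrow> t \<le> t' \<Longrightarrow> t' \<le> 1 \<Longrightarrow> sv t \<le> sv t'"
  using sv_key[of t t'] by (smt (verit) norm_ge_zero)

lemma reparam:
  obtains a b p where "0 \<le> a" "a \<le> b" "b \<le> path_length g" "p a = g 0" "p b = g 1"
    "p ` {a..b} \<subseteq> g ` {0..1}"
    "\<And>\<sigma> \<sigma>'. \<sigma> \<in> {a..b} \<Longrightarrow> \<sigma>' \<in> {a..b} \<Longrightarrow> dist (p \<sigma>) (p \<sigma>') \<le> dist \<sigma> \<sigma>'"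
proof -
  define a where "a = sv 0"
  define b where "b = sv 1"
  define X where "X \<sigma> = {u\<in>{0..1}. sv u \<le> \<sigma>}" for \<sigma>
  define T where "T \<sigma> = Sup (X \<sigma>)" for \<sigma>
  have gc: "continuous_on {0..1} g" using rp by (simp add: rectifiable_path_def path_def)
  have X0: "0 \<in> X \<sigma>" if "a \<le> \<sigma>" for \<sigma> using that by (simp add: X_def a_def)
  have Xne: "X \<sigma> \<noteq> {}" if "a \<le> \<sigma>" for \<sigma> using X0[OF that] by blast
  have bddX: "bdd_above (X \<sigma>)" for \<sigma> by (rule bdd_aboveI[of _ 1]) (auto simp: X_def)
  have XT: "u \<le> T \<sigma>" if "u \<in> X \<sigma>" for u \<sigma> unfolding T_def using that bddX by (rule cSup_upper)
  have T0: "0 \<le> T \<sigma>" if "a \<le> \<sigma>" for \<sigma> using XT[OF X0[OF that]] .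
  have T1: "T \<sigma> \<le> 1" if "a \<le> \<sigma>" for \<sigma> unfolding T_def using Xne[OF that]
    by (rule cSup_least) (auto simp: X_def)
  have above: "\<sigma> < sv u" if "a \<le> \<sigma>" "u \<in> {0..1}" "T \<sigma> < u" for \<sigma> u
  proof (rule ccontr)
    assume "\<not> \<sigma> < sv u"
    then have "u \<in> X \<sigma>" using that by (auto simp: X_def)
    then show False using XT that by force
  qed
  have K1: "norm (g (T \<sigma>') - g (T \<sigma>)) \<le> \<sigma>' - \<sigma>" if s: "a \<le> \<sigma>" "\<sigma> \<le> \<sigma>'" for \<sigma> \<sigma>'
  proof -
    have le: "T \<sigma> \<le> T \<sigma>'" unfolding T_def
      by (rule cSup_subset_mono[OF Xne[OF s(1)] bddX]) (use s in \<open>auto simp: X_def\<close>)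
    show ?thesis
    proof (cases "T \<sigma> = T \<sigma>'")
      case True then show ?thesis using s by simp
    next
      case False
      with le have lt: "T \<sigma> < T \<sigma>'" by simp
      have s': "a \<le> \<sigma>'" using s by simp
      define U where "U = {u \<in> X \<sigma>'. T \<sigma> < u}"
      have C1: "norm (g u - g (T \<sigma>)) \<le> \<sigma>' - \<sigma>" if uU: "u \<in> U" for u
      proof -
        have u: "u \<in> {0..1}" "sv u \<le> \<sigma>'" "T \<sigma> < u" using uU by (auto simp: U_def X_def)
        have cl: "closure {T \<sigma><..<u} = {T \<sigma>..u}" using u by simp
        have sub: "{T \<sigma>..u} \<subseteq> {0..1}" using u T0[OF s(1)] by auto
        show ?thesis
        proof (rule continuous_le_on_closure[where S="{T \<sigma><..<u}" and f="\<lambda>w. norm (g u - g w)"])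
          show "continuous_on (closure {T \<sigma><..<u}) (\<lambda>w. norm (g u - g w))"
            unfolding cl by (intro continuous_intros continuous_on_subset[OF gc sub])
          show "T \<sigma> \<in> closure {T \<sigma><..<u}" using cl u by simp
          fix w assume w: "w \<in> {T \<sigma><..<u}"
          then have w01: "0 \<le> w" "w \<le> u" "u \<le> 1" using u T0[OF s(1)] by auto
          have "\<sigma> < sv w" using above[OF s(1), of w] w w01 by auto
          moreover have "sv w + norm (g u - g w) \<le> sv u" using sv_key[OF w01] .
          ultimately show "norm (g u - g w) \<le> \<sigma>' - \<sigma>" using u by linarith
        qed
      qed
      have C2: "T \<sigma>' \<in> closure U"
        unfolding closure_approachable
      proof (intro allI impI)
        fix e :: real assume e: "e > 0"
        have "max (T \<sigma>) (T \<sigma>' - e) < Sup (X \<sigma>')" using lt e by (simp add: T_def)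
        then obtain u where u: "u \<in> X \<sigma>'" "max (T \<sigma>) (T \<sigma>' - e) < u"
          using less_cSup_iff[OF Xne[OF s'] bddX] by blast
        have "u \<le> T \<sigma>'" using XT[OF u(1)] .
        then show "\<exists>y\<in>U. dist y (T \<sigma>') < e"
          using u by (intro bexI[of _ u]) (auto simp: U_def dist_real_def)
      qed
      have clU: "closure U \<subseteq> {0..1}"
        by (rule closure_minimal) (auto simp: U_def X_def)
      show ?thesis
        by (rule continuous_le_on_closure[where f="\<lambda>u. norm (g u - g (T \<sigma>))", OF _ C2 C1])
           (intro continuous_intros continuous_on_subset[OF gc clU])
    qed
  qed
  have K2: "g (T a) = g 0"
  proof -
    have clX: "closure (X a) \<subseteq> {0..1}" by (rule closure_minimal) (auto simp: X_def)
    have "T a \<in> closure (X a)" unfolding T_def by (rule closure_contains_Sup[OF Xne bddX]) simp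
    then have "norm (g (T a) - g 0) \<le> 0"
    proof (rule continuous_le_on_closure[where f="\<lambda>u. norm (g u - g 0)", rotated])
      show "continuous_on (closure (X a)) (\<lambda>u. norm (g u - g 0))"
        by (intro continuous_intros continuous_on_subset[OF gc clX])
      fix u assume "u \<in> X a"
      then have "0 \<le> u" "u \<le> 1" "sv u \<le> sv 0" by (auto simp: X_def a_def)
      with sv_key[of 0 u] show "norm (g u - g 0) \<le> 0" by linarith
    qed
    then show ?thesis by simp
  qed
  have K3: "T b = 1"
  proof -
    have "X b = {0..1}"
      using sv_mono[of _ 1] by (auto simp: X_def b_def)
    then show ?thesis by (simp add: T_def)
  qed
  have ab: "a \<le> b" using sv_mono[of 0 1] by (simp add: a_def b_def)
  show ?thesis
  proof (rule that[of a b "\<lambda>\<sigma>. g (T \<sigma>)"])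
    show "0 \<le> a" using sv_nonneg[of 0] by (simp add: a_def)
    show "a \<le> b" by (rule ab)
    show "b \<le> path_length g" using sv_le_length[of 1] by (simp add: b_def)
    show "g (T a) = g 0" by (rule K2)
    show "g (T b) = g 1" by (simp add: K3)
    show "(\<lambda>\<sigma>. g (T \<sigma>)) ` {a..b} \<subseteq> g ` {0..1}" using T0 T1 by auto
    fix \<sigma> \<sigma>' assume "\<sigma> \<in> {a..b}" "\<sigma>' \<in> {a..b}"
    then show "dist (g (T \<sigma>)) (g (T \<sigma>')) \<le> dist \<sigma> \<sigma>'"
      using K1[of \<sigma> \<sigma>'] K1[of \<sigma>' \<sigma>]
      by (cases "\<sigma> \<le> \<sigma>'") (auto simp: dist_norm dist_real_def norm_minus_commute)
  qed
qed

end




lemma inner_vec_deriv: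
  fixes p :: "real \<Rightarrow> 'a::real_inner"
  assumes "(p has_vector_derivative v) F"
  shows "((\<lambda>s. c \<bullet> p s) has_real_derivative c \<bullet> v) F"
proof -
  have "(p has_derivative (\<lambda>h. h *\<^sub>R v)) F" using assms by (simp add: has_vector_derivative_def)
  then have "((\<lambda>s. c \<bullet> p s) has_derivative (\<lambda>h. c \<bullet> (h *\<^sub>R v))) F"
    by (rule has_derivative_inner_right)
  then show ?thesis unfolding has_field_derivative_def by (simp add: mult.commute[of _ "c \<bullet> v"])
qed

lemma deriv_norm_le:
  fixes p :: "real \<Rightarrow> 'a::real_inner"
  assumes ab: "a < b" and t: "t \<in> {a..b}" and der: "(p has_vector_derivative v) (at t within {a..b})"
    and lip: "\<And>s s'. s \<in> {a..b} \<Longrightarrow> s' \<in> {a..b} \<Longrightarrow> dist (p s) (p s') \<le> dist s s'"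
  shows "norm v \<le> 1"
proof -
  have q: "((\<lambda>s. v \<bullet> p s) has_real_derivative v \<bullet> v) (at t within {a..b})"
    by (rule inner_vec_deriv[OF der])
  then have lim: "((\<lambda>y. (v \<bullet> p y - v \<bullet> p t) / (y - t)) \<longlongrightarrow> v \<bullet> v) (at t within {a..b})"
    by (simp add: has_field_derivative_iff)
  have ev: "\<forall>\<^sub>F y in at t within {a..b}. \<bar>(v \<bullet> p y - v \<bullet> p t) / (y - t)\<bar> \<le> norm v"
    unfolding eventually_at_filter
  proof (rule always_eventually, intro allI impI)
    fix y assume y: "y \<noteq> t" "y \<in> {a..b}"
    have "\<bar>v \<bullet> p y - v \<bullet> p t\<bar> = \<bar>v \<bullet> (p y - p t)\<bar>" by (simp add: inner_diff_right)
    also have "\<dots> \<le> norm v * norm (p y - p t)" by (rule Cauchy_Schwarz_ineq2)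
    also have "\<dots> \<le> norm v * \<bar>y - t\<bar>"
      using lip[OF y(2) t] by (intro mult_left_mono) (auto simp: dist_norm)
    finally show "\<bar>(v \<bullet> p y - v \<bullet> p t) / (y - t)\<bar> \<le> norm v"
      using y by (simp add: abs_divide divide_le_eq)
  qed
  have nb: "at t within {a..b} \<noteq> bot"
    using ab t by (simp add: trivial_limit_within)
  have "\<bar>v \<bullet> v\<bar> \<le> norm v"
    by (rule tendsto_upperbound[OF tendsto_rabs[OF lim] ev nb])
  then have "norm v * norm v \<le> norm v * 1"
    by (simp add: power2_norm_eq_inner[symmetric] power2_eq_square)
  then show ?thesis
    by (cases "norm v = 0") (auto simp: mult_le_cancel_left)
qed




theorem mainTheorem2:
  fixes E :: "'a::euclidean_space set"
    and k :: real
    and A :: "'a \<Rightarrow> 'a"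
    and f :: "'a \<Rightarrow> real"
  assumes "closed E"
    and "k \<ge> 1"
    and "\<forall>x\<in>E. \<forall>y\<in>E. \<exists>g. rectifiable_path g \<and> pathstart g = x \<and> pathfinish g = y
           \<and> path_image g \<subseteq> E \<and> path_length g \<le> k * norm (x - y)"
    and "continuous_on E A"
    and "loc_lipschitz_on E f"
    and "\<And>I p. is_interval I \<Longrightarrow> p ` I \<subseteq> E \<Longrightarrow> loc_lipschitz_on I p \<Longrightarrow>
           AE t in lebesgue. t \<in> I \<longrightarrow>
             (\<exists>v D. (p has_vector_derivative v) (at t within I)
                  \<and> ((\<lambda>s. f (p s)) has_real_derivative D) (at t within I)
                  \<and> D = A (p t) \<bullet> v)"
  shows "\<forall>x\<in>E. \<forall>y\<in>E. \<bar>f y - f x - A x \<bullet> (y - x)\<bar>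
           \<le> k * norm (x - y) * Sup {norm (A w - A x) | w. w \<in> E \<and> norm (x - w) \<le> k * norm (x - y)}"
proof (intro ballI)
  fix x y assume x: "x \<in> E" and y: "y \<in> E"
  define R where "R = k * norm (x - y)"
  define W where "W = {norm (A w - A x) | w. w \<in> E \<and> norm (x - w) \<le> R}"
  define M where "M = Sup W"
  have R0: "0 \<le> R" using assms(2) by (simp add: R_def)
  have W_eq: "W = (\<lambda>w. norm (A w - A x)) ` (E \<inter> cball x R)"
    by (auto simp: W_def dist_norm)
  have bddW: "bdd_above W"
  proof -
    have "compact (E \<inter> cball x R)" using assms(1) by (intro closed_Int_compact) auto
    moreover have "continuous_on (E \<inter> cball x R) (\<lambda>w. norm (A w - A x))"
      by (intro continuous_intros continuous_on_subset[OF assms(4)]) auto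
    ultimately have "compact W" unfolding W_eq by (rule compact_continuous_image[rotated])
    then show ?thesis by (intro bounded_imp_bdd_above compact_imp_bounded)
  qed
  have xW: "0 \<in> W" using x R0 by (auto simp: W_def intro!: exI[of _ x])
  have M0: "0 \<le> M" unfolding M_def using xW bddW by (rule cSup_upper)
  have WM: "norm (A w - A x) \<le> M" if "w \<in> E" "norm (x - w) \<le> R" for w
    unfolding M_def using that bddW by (intro cSup_upper) (auto simp: W_def)
  show "\<bar>f y - f x - A x \<bullet> (y - x)\<bar> \<le> k * norm (x - y) * Sup {norm (A w - A x) | w. w \<in> E \<and> norm (x - w) \<le> k * norm (x - y)}"
  proof (cases "x = y")
    case True then show ?thesis by simp
  next
    case False
    obtain g where g: "rectifiable_path g" "pathstart g = x" "pathfinish g = y"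
      "path_image g \<subseteq> E" "path_length g \<le> R"
      using bspec[OF bspec[OF assms(3) x] y] unfolding R_def by blast
    obtain a b p where ab: "0 \<le> a" "a \<le> b" "b \<le> path_length g" "p a = g 0" "p b = g 1"
      "p ` {a..b} \<subseteq> g ` {0..1}"
      and lp: "\<And>\<sigma> \<sigma>'. \<sigma> \<in> {a..b} \<Longrightarrow> \<sigma>' \<in> {a..b} \<Longrightarrow> dist (p \<sigma>) (p \<sigma>') \<le> dist \<sigma> \<sigma>'"
      using reparam[OF g(1)] by blast
    have pa: "p a = x" and pb: "p b = y" using ab g by (auto simp: pathstart_def pathfinish_def)
    have pE: "p ` {a..b} \<subseteq> E" using ab(6) g(4) by (auto simp: path_image_def)
    have abR: "b - a \<le> R" using ab g(5) by linarith
    have ablt: "a < b" using ab(2) pa pb False by (cases "a = b") auto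
    have lipI: "1-lipschitz_on {a..b} p" by (rule lipschitz_onI) (use lp in auto)
    have llI: "loc_lipschitz_on {a..b} p"
      unfolding loc_lipschitz_on_def
      by (intro ballI exI[of _ "1::real"] conjI exI[of _ "1::real"] lipschitz_on_subset[OF lipI]) auto
    have AEp: "AE t in lebesgue. t \<in> {a..b} \<longrightarrow>
             (\<exists>v D. (p has_vector_derivative v) (at t within {a..b})
                  \<and> ((\<lambda>s. f (p s)) has_real_derivative D) (at t within {a..b})
                  \<and> D = A (p t) \<bullet> v)"
      by (rule assms(6)[OF is_interval_cc pE llI])
    then obtain N where N: "{t \<in> space lebesgue. \<not> (t \<in> {a..b} \<longrightarrow>
             (\<exists>v D. (p has_vector_derivative v) (at t within {a..b})
                  \<and> ((\<lambda>s. f (p s)) has_real_derivative D) (at t within {a..b})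
                  \<and> D = A (p t) \<bullet> v))} \<subseteq> N" "emeasure lebesgue N = 0" "N \<in> sets lebesgue"
      by (rule AE_E)
    have negN: "negligible N" using N(2,3) by (simp add: negligible_iff_null_sets null_sets_def)
    define \<phi> where "\<phi> s = f (p s) - A x \<bullet> p s" for s
    have dist_x: "norm (x - p t) \<le> R" if "t \<in> {a..b}" for t
    proof -
      have "norm (x - p t) = dist (p a) (p t)" using pa by (simp add: dist_norm)
      also have "\<dots> \<le> dist a t" using lp[of a t] that ab by auto
      also have "\<dots> \<le> R" using that abR by (auto simp: dist_real_def)
      finally show ?thesis .
    qed
    have der: "\<exists>D. (\<phi> has_real_derivative D) (at t within {a..b}) \<and> \<bar>D\<bar> \<le> M"
      if t: "t \<in> {a..b} - N" for t
    proof -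
      have "t \<in> {a..b}" using t by simp
      moreover have "t \<notin> N" using t by simp
      ultimately have "\<exists>v D. (p has_vector_derivative v) (at t within {a..b})
                  \<and> ((\<lambda>s. f (p s)) has_real_derivative D) (at t within {a..b})
                  \<and> D = A (p t) \<bullet> v"
        using N(1) by (force simp: subset_iff)
      then obtain v D where vD: "(p has_vector_derivative v) (at t within {a..b})"
          "((\<lambda>s. f (p s)) has_real_derivative D) (at t within {a..b})" "D = A (p t) \<bullet> v"
        by blast
      have d\<phi>: "(\<phi> has_real_derivative D - A x \<bullet> v) (at t within {a..b})"
        unfolding \<phi>_def by (intro DERIV_diff vD(2) inner_vec_deriv vD(1))
      have nv: "norm v \<le> 1" using deriv_norm_le[OF ablt _ vD(1) lp] t by auto
      have "\<bar>D - A x \<bullet> v\<bar> = \<bar>(A (p t) - A x) \<bullet> v\<bar>" using vD(3) by (simp add: inner_diff_left)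
      also have "\<dots> \<le> norm (A (p t) - A x) * norm v" by (rule Cauchy_Schwarz_ineq2)
      also have "\<dots> \<le> M * 1"
      proof (rule mult_mono)
        have "t \<in> {a..b}" using t by simp
        then have "p t \<in> E" "norm (x - p t) \<le> R" using pE dist_x[of t] by auto
        then show "norm (A (p t) - A x) \<le> M" by (rule WM)
      qed (use nv M0 in auto)
      finally show ?thesis using d\<phi> by auto
    qed
    have lip\<phi>: "\<exists>T B. open T \<and> t \<in> T \<and> (\<forall>s\<in>{a..b} \<inter> T. \<bar>\<phi> s - \<phi> t\<bar> \<le> B * \<bar>s - t\<bar>)"
      if t: "t \<in> {a..b}" for t
    proof -
      have ptE: "p t \<in> E" using pE t by auto
      obtain r L where r: "r > 0" and L: "L-lipschitz_on (ball (p t) r \<inter> E) f"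
        using assms(5) ptE unfolding loc_lipschitz_on_def by blast
      show ?thesis
      proof (intro exI[of _ "ball t r"] exI[of _ "L + norm (A x)"] conjI ballI)
        show "open (ball t r)" by simp
        show "t \<in> ball t r" using r by simp
        fix s assume s: "s \<in> {a..b} \<inter> ball t r"
        have dps: "dist (p s) (p t) \<le> \<bar>s - t\<bar>" using lp[of s t] s t by (auto simp: dist_real_def)
        have "dist (p s) (p t) < r" using dps s by (auto simp: dist_real_def dist_commute)
        then have ps: "p s \<in> ball (p t) r \<inter> E" using pE s by (auto simp: dist_commute)
        have pt: "p t \<in> ball (p t) r \<inter> E" using ptE r by simp
        have L0: "0 \<le> L" using L by (simp add: lipschitz_on_def)
        have "\<bar>f (p s) - f (p t)\<bar> \<le> L * dist (p s) (p t)"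
          using lipschitz_onD[OF L ps pt] by (simp add: dist_real_def)
        also have "\<dots> \<le> L * \<bar>s - t\<bar>" using dps L0 by (rule mult_left_mono)
        finally have 1: "\<bar>f (p s) - f (p t)\<bar> \<le> L * \<bar>s - t\<bar>" .
        have "\<bar>A x \<bullet> p s - A x \<bullet> p t\<bar> = \<bar>A x \<bullet> (p s - p t)\<bar>" by (simp add: inner_diff_right)
        also have "\<dots> \<le> norm (A x) * norm (p s - p t)" by (rule Cauchy_Schwarz_ineq2)
        also have "\<dots> \<le> norm (A x) * \<bar>s - t\<bar>" using dps by (intro mult_left_mono) (auto simp: dist_norm)
        finally have 2: "\<bar>A x \<bullet> p s - A x \<bullet> p t\<bar> \<le> norm (A x) * \<bar>s - t\<bar>" .
        show "\<bar>\<phi> s - \<phi> t\<bar> \<le> (L + norm (A x)) * \<bar>s - t\<bar>"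
          using 1 2 unfolding \<phi>_def by (simp add: distrib_right abs_le_iff)
      qed
    qed
    have main: "\<bar>\<phi> b - \<phi> a\<bar> \<le> M * (b - a)"
      by (rule ae_deriv_bound[OF ab(2) M0 negN der lip\<phi>])
    have "\<phi> b - \<phi> a = f y - f x - A x \<bullet> (y - x)"
      using pa pb by (simp add: \<phi>_def inner_diff_right)
    moreover have "M * (b - a) \<le> M * R" using abR M0 by (rule mult_left_mono)
    ultimately have "\<bar>f y - f x - A x \<bullet> (y - x)\<bar> \<le> R * M" using main by (simp add: mult.commute)
    then show ?thesis by (simp add: R_def M_def W_def)
  qed
qed


end
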